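(* Let $Q_{n,m}$ be as defined in the context. Every code of $Q_{n,m}$ has dimension at most $\lceil n/(m+1)\rceil$.
   Context: A quantum graph $G$ consists of a finite-dimensional complex inner product space $V(G)$ and a real vector space $E(G)$ of self-adjoint operators on $V(G)$ containing the identity $I$; write $|G|=\dim V(G)$ and $\|G\|=\dim E(G)-1$. A code of $G$ is a subspace $C\subseteq V(G)$ such that there is a function $\epsilon_C:E(G)\to\mathbb{R}$ with $P_CAP_C=\epsilon_C(A)P_C$ for all $A\in E(G)$, where $P_C$ is the orthogonal projection onto $C$. Let $n\ge 2$ and $1\le m\le n-1$ be integers. $Q_{n,m}$ denotes any quantum graph with $|Q_{n,m}|=n$, $\|Q_{n,m}\|=m$, such that: (i) $E(Q_{n,m})$ is commutative; (ii) (tropical) $E(Q_{n,m})$ has a basis $\{I,A_1,\dots,A_m\}$ and there is an orthonormal basis of $V(Q_{n,m})$ of common eigenvectors of the $A_i$ such that, writing the eigenvalues of $A_i$ in decreasing order $\lambda_{i,1},\dots,\lambda_{i,n}$ with corresponding common eigenvectors $w_{i,1},\dots,w_{i,n}$, one has $0<\lambda_{i,j+1}<\lambda_{i,j}/n^2$ for all $i$ and $1\le j<n$; (iii) (cyclical) for $1\le i<m$ and all $j$, $w_{i+1,j}=w_{i,j+s_i}$, with the second index taken modulo $n$ in $\{1,\dots,n\}$, where $s_i=\lfloor n/m\rfloor+1$ if $1\le i\le (n\bmod m)$ and $s_i=\lfloor n/m\rfloor$ otherwise; (iv) the common eigenvectors are enumerated as $w_1,\dots,w_n$ (each common eigenvector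 exactly once) so that for every $l\in\{1,\dots,n\}$ one has $w_l=w_{i,\lceil l/m\rceil}$ for some $i\in\{1,\dots,m\}$. *)

theory Defs
  imports "Jordan_Normal_Form.Schur_Decomposition" "Jordan_Normal_Form.VS_Connect"
begin

text \<open>The ambient space V(G) is modelled as C^n = carrier_vec n (complex vectors of
  dimension n) with the standard inner product v \<bullet>c w.\<close>

definition csubspace :: "nat \<Rightarrow> complex vec set \<Rightarrow> bool" where
  "csubspace n C \<longleftrightarrow> VectorSpace.subspace class_ring C (module_vec TYPE(complex) n)"

definition cdim :: "nat \<Rightarrow> complex vec set \<Rightarrow> nat" where
  "cdim n C = vectorspace.dim class_ring ((module_vec TYPE(complex) n)\<lparr>carrier := C\<rparr>)"

definition self_adjoint :: "nat \<Rightarrow> complex mat \<Rightarrow> bool" where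
  "self_adjoint n A \<longleftrightarrow> A \<in> carrier_mat n n \<and> mat_adjoint A = A"

definition is_orth_proj :: "nat \<Rightarrow> complex vec set \<Rightarrow> complex mat \<Rightarrow> bool" where
  "is_orth_proj n C P \<longleftrightarrow> P \<in> carrier_mat n n \<and> P * P = P \<and> mat_adjoint P = P
      \<and> {P *\<^sub>v v | v. v \<in> carrier_vec n} = C"

definition orth_proj :: "nat \<Rightarrow> complex vec set \<Rightarrow> complex mat" where
  "orth_proj n C = (THE P. is_orth_proj n C P)"

definition is_code :: "nat \<Rightarrow> complex mat set \<Rightarrow> complex vec set \<Rightarrow> bool" where
  "is_code n E C \<longleftrightarrow> csubspace n C \<and>
     (\<exists>\<epsilon> :: complex mat \<Rightarrow> real. \<forall>X\<in>E.
        orth_proj n C * X * orth_proj n C = complex_of_real (\<epsilon> X) \<cdot>\<^sub>m orth_proj n C)"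

definition lincomb :: "nat \<Rightarrow> (nat \<Rightarrow> complex mat) \<Rightarrow> nat \<Rightarrow> (nat \<Rightarrow> real) \<Rightarrow> complex mat" where
  "lincomb n A m c = mat n n (\<lambda>(r,s). complex_of_real (c 0) * (1\<^sub>m n) $$ (r,s)
       + (\<Sum>i=1..m. complex_of_real (c i) * A i $$ (r,s)))"

definition span_E :: "nat \<Rightarrow> (nat \<Rightarrow> complex mat) \<Rightarrow> nat \<Rightarrow> complex mat set" where
  "span_E n A m = {lincomb n A m c | c. True}"

definition shift :: "nat \<Rightarrow> nat \<Rightarrow> nat \<Rightarrow> nat" where
  "shift n m i = (if 1 \<le> i \<and> i \<le> n mod m then n div m + 1 else n div m)"

end

theory Submission
  imports Defs "Jordan_Normal_Form.DL_Rank"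
begin

lemma adj_carrier: "(A::complex mat) \<in> carrier_mat n k \<Longrightarrow> mat_adjoint A \<in> carrier_mat k n"
  unfolding mat_adjoint_def by auto
lemma adj_index: "(A::complex mat) \<in> carrier_mat n k \<Longrightarrow> i < k \<Longrightarrow> j < n \<Longrightarrow> mat_adjoint A $$ (i,j) = cnj (A $$ (j,i))"
  unfolding mat_adjoint_def by (auto simp: mat_of_rows_def)

lemma adj_adj: assumes "(A::complex mat) \<in> carrier_mat n k" shows "mat_adjoint (mat_adjoint A) = A"
  apply (rule eq_matI)
  using assms adj_carrier[OF assms] adj_carrier[OF adj_carrier[OF assms]]
  by (auto simp: adj_index)

lemma adj_mult: assumes A: "(A::complex mat) \<in> carrier_mat n k" and B: "B \<in> carrier_mat k l"
  shows "mat_adjoint (A*B) = mat_adjoint B * mat_adjoint A"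
proof (rule eq_matI)
  have AB: "A * B \<in> carrier_mat n l" using A B by auto
  fix i j assume "i < dim_row (mat_adjoint B * mat_adjoint A)" "j < dim_col (mat_adjoint B * mat_adjoint A)"
  hence ij: "i < l" "j < n" using adj_carrier[OF A] adj_carrier[OF B] by auto
  have "mat_adjoint (A*B) $$ (i,j) = cnj ((A*B) $$ (j,i))" using adj_index[OF AB ij] .
  also have "\<dots> = (\<Sum>t<k. cnj (A $$ (j,t)) * cnj (B $$ (t,i)))"
    using A B ij by (simp add: scalar_prod_def lessThan_atLeast0)
  also have "\<dots> = (mat_adjoint B * mat_adjoint A) $$ (i,j)"
    using A B ij adj_carrier[OF A] adj_carrier[OF B]
    by (simp add: scalar_prod_def adj_index lessThan_atLeast0 mult.commute)
  finally show "mat_adjoint (A * B) $$ (i, j) = (mat_adjoint B * mat_adjoint A) $$ (i, j)" .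
qed (use A B adj_carrier[OF A] adj_carrier[OF B] adj_carrier[of "A*B" n l] in auto)

lemma adj_sprod: assumes A: "(A::complex mat) \<in> carrier_mat n k" and x: "x \<in> carrier_vec k" and y: "y \<in> carrier_vec n"
  shows "(A *\<^sub>v x) \<bullet>c y = x \<bullet>c (mat_adjoint A *\<^sub>v y)"
proof -
  have "(A *\<^sub>v x) \<bullet>c y = (\<Sum>i<n. (\<Sum>j<k. A $$ (i,j) * x $ j) * cnj (y $ i))"
    using A x y by (simp add: scalar_prod_def lessThan_atLeast0)
  also have "\<dots> = (\<Sum>i<n. \<Sum>j<k. A $$ (i,j) * x $ j * cnj (y $ i))"
    by (simp add: sum_distrib_right)
  also have "\<dots> = (\<Sum>j<k. \<Sum>i<n. A $$ (i,j) * x $ j * cnj (y $ i))"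
    by (rule sum.swap)
  also have "\<dots> = (\<Sum>j<k. x $ j * cnj (\<Sum>i<n. cnj (A $$ (i,j)) * y $ i))"
    by (simp add: sum_distrib_left mult_ac)
  also have "\<dots> = x \<bullet>c (mat_adjoint A *\<^sub>v y)"
    using A x y adj_carrier[OF A] by (simp add: scalar_prod_def lessThan_atLeast0 adj_index)
  finally show ?thesis .
qed

lemma mat_eq_by_vec: assumes A: "(A::complex mat) \<in> carrier_mat n k" and B: "B \<in> carrier_mat n k"
  and eq: "\<And>v. v \<in> carrier_vec k \<Longrightarrow> A *\<^sub>v v = B *\<^sub>v v"
  shows "A = B"
proof (rule eq_matI)
  fix i j assume i: "i < dim_row B" and j: "j < dim_col B"
  have uv: "unit_vec k j \<in> carrier_vec k" by simp
  have "A *\<^sub>v unit_vec k j = col A j" using A j B by (intro eq_vecI) (auto)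
  moreover have "B *\<^sub>v unit_vec k j = col B j" using B j by (intro eq_vecI) (auto)
  ultimately have "col A j = col B j" using eq[OF uv] by simp
  hence "col A j $ i = col B j $ i" by simp
  thus "A $$ (i,j) = B $$ (i,j)" using A B i j by simp
qed (use A B in auto)


lemma orth_proj_unique:
  assumes P: "is_orth_proj n C P" and Q: "is_orth_proj n C Q" shows "P = Q"
proof -
  have Pc: "P \<in> carrier_mat n n" and PP: "P * P = P" and Pa: "mat_adjoint P = P"
    and Pr: "{P *\<^sub>v v | v. v \<in> carrier_vec n} = C" using P unfolding is_orth_proj_def by auto
  have Qc: "Q \<in> carrier_mat n n" and QQ: "Q * Q = Q" and Qa: "mat_adjoint Q = Q"
    and Qr: "{Q *\<^sub>v v | v. v \<in> carrier_vec n} = C" using Q unfolding is_orth_proj_def by auto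
  have fix1: "X * Y = Y" if Xc: "X \<in> carrier_mat n n" and XX: "X * X = X"
     and Yc: "Y \<in> carrier_mat n n"
     and r: "{X *\<^sub>v v | v. v \<in> carrier_vec n} = {Y *\<^sub>v v | v. v \<in> carrier_vec n}" for X Y :: "complex mat"
  proof (rule mat_eq_by_vec[of _ n n])
    show "X * Y \<in> carrier_mat n n" using Xc Yc by auto
    show "Y \<in> carrier_mat n n" by fact
    fix v :: "complex vec" assume v: "v \<in> carrier_vec n"
    have "Y *\<^sub>v v \<in> {X *\<^sub>v v | v. v \<in> carrier_vec n}" using r v by auto
    then obtain w where w: "w \<in> carrier_vec n" "Y *\<^sub>v v = X *\<^sub>v w" by auto
    have "(X * Y) *\<^sub>v v = X *\<^sub>v (Y *\<^sub>v v)" using Xc Yc v by (simp add: assoc_mult_mat_vec)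
    also have "\<dots> = (X * X) *\<^sub>v w" using w Xc by (simp add: assoc_mult_mat_vec)
    also have "\<dots> = Y *\<^sub>v v" using XX w by simp
    finally show "(X * Y) *\<^sub>v v = Y *\<^sub>v v" .
  qed
  have PQ: "P * Q = Q" using fix1[OF Pc PP Qc] Pr Qr by simp
  have QP: "Q * P = P" using fix1[OF Qc QQ Pc] Pr Qr by simp
  have "Q = mat_adjoint Q" using Qa by simp
  also have "\<dots> = mat_adjoint (P * Q)" using PQ by simp
  also have "\<dots> = mat_adjoint Q * mat_adjoint P" using adj_mult[OF Pc Qc] .
  also have "\<dots> = Q * P" using Pa Qa by simp
  also have "\<dots> = P" using QP .
  finally show ?thesis by simp
qed

lemma proj_of_isometry:
  assumes U: "U \<in> carrier_mat n k" and UU: "mat_adjoint U * U = 1\<^sub>m k"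
  shows "is_orth_proj n {U *\<^sub>v x | x. x \<in> carrier_vec k} (U * mat_adjoint U)"
proof -
  have Ua: "mat_adjoint U \<in> carrier_mat k n" using adj_carrier[OF U] .
  have c: "U * mat_adjoint U \<in> carrier_mat n n" using U Ua by auto
  have "U * mat_adjoint U * (U * mat_adjoint U) = U * (mat_adjoint U * (U * mat_adjoint U))"
    by (rule assoc_mult_mat[OF U Ua c])
  also have "mat_adjoint U * (U * mat_adjoint U) = (mat_adjoint U * U) * mat_adjoint U"
    by (rule assoc_mult_mat[symmetric, OF Ua U Ua])
  also have "U * ((mat_adjoint U * U) * mat_adjoint U) = U * mat_adjoint U" using UU Ua by simp
  finally have idem: "U * mat_adjoint U * (U * mat_adjoint U) = U * mat_adjoint U" .
  have sa: "mat_adjoint (U * mat_adjoint U) = U * mat_adjoint U"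
    using adj_mult[OF U Ua] adj_adj[OF U] by simp
  have rng: "{(U * mat_adjoint U) *\<^sub>v v | v. v \<in> carrier_vec n} = {U *\<^sub>v x | x. x \<in> carrier_vec k}"
  proof (intro equalityI subsetI)
    fix y assume "y \<in> {(U * mat_adjoint U) *\<^sub>v v | v. v \<in> carrier_vec n}"
    then obtain v where v: "v \<in> carrier_vec n" "y = (U * mat_adjoint U) *\<^sub>v v" by auto
    hence "y = U *\<^sub>v (mat_adjoint U *\<^sub>v v)" using U Ua by (simp add: assoc_mult_mat_vec)
    thus "y \<in> {U *\<^sub>v x | x. x \<in> carrier_vec k}" using Ua v by auto
  next
    fix y assume "y \<in> {U *\<^sub>v x | x. x \<in> carrier_vec k}"
    then obtain x where x: "x \<in> carrier_vec k" "y = U *\<^sub>v x" by auto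
    have "(U * mat_adjoint U) *\<^sub>v (U *\<^sub>v x) = U *\<^sub>v ((mat_adjoint U * U) *\<^sub>v x)"
      using U Ua x by (simp add: assoc_mult_mat_vec)
    also have "\<dots> = U *\<^sub>v x" using UU x by simp
    finally show "y \<in> {(U * mat_adjoint U) *\<^sub>v v | v. v \<in> carrier_vec n}"
      using x U by (metis (mono_tags, lifting) mem_Collect_eq mult_mat_vec_carrier)
  qed
  show ?thesis unfolding is_orth_proj_def using c idem sa rng by auto
qed

lemma orth_proj_eq:
  assumes U: "U \<in> carrier_mat n k" and UU: "mat_adjoint U * U = 1\<^sub>m k"
  shows "orth_proj n {U *\<^sub>v x | x. x \<in> carrier_vec k} = U * mat_adjoint U"
  unfolding orth_proj_def
  using proj_of_isometry[OF U UU] orth_proj_unique by blast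



context fixes n :: nat begin
interpretation V: vec_space "TYPE(complex)" n .

lemma sub_basis:
  assumes sub: "csubspace n C"
  shows "\<exists>A. finite A \<and> A \<subseteq> C \<and> V.lin_indpt A \<and> V.span A = C \<and> cdim n C = card A"
proof -
  have subs: "VectorSpace.subspace class_ring C V.V" using sub unfolding csubspace_def .
  have submod: "submodule class_ring C V.V" using subs by simp
  have Ccar: "C \<subseteq> carrier_vec n" using submod unfolding submodule_def by auto
  interpret W: vectorspace class_ring "V.vs C" using V.subspace_is_vs[OF subs] .
  let ?P = "\<lambda>S. S \<subseteq> carrier (V.vs C) \<and> W.lin_indpt S"
  have transf: "W.lin_indpt S \<longleftrightarrow> V.lin_indpt S" if "S \<subseteq> C" for S
    using V.span_li_not_depend(2)[OF that submod] by simp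
  have bound: "finite S \<and> card S \<le> n" if "?P S" for S
  proof -
    have "S \<subseteq> C" "V.lin_indpt S" using that transf by auto
    thus ?thesis using V.li_le_dim[OF V.fin_dim] Ccar V.dim_is_n by auto
  qed
  have P0: "?P {}" unfolding W.lin_dep_def by auto
  obtain A where Afin: "finite A" and Amax: "maximal A ?P"
    using maximal_exists[of ?P n "{}", OF bound P0] by blast
  have AP: "?P A" using Amax unfolding maximal_def by auto
  have gen: "W.gen_set A" by (rule W.max_li_is_gen[OF Amax])
  have basis: "W.basis A" unfolding W.basis_def using AP gen by auto
  have dimA: "W.dim = card A" using W.dim_basis[OF Afin basis] .
  have AC: "A \<subseteq> C" using AP by simp
  have "V.span A = W.span A" using V.span_li_not_depend(1)[OF AC submod] by simp
  also have "\<dots> = C" using gen by simp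
  finally have spanA: "V.span A = C" .
  have li: "V.lin_indpt A" using AP transf AC by auto
  have "cdim n C = card A" unfolding cdim_def using dimA by simp
  thus ?thesis using Afin AC li spanA by blast
qed

end



lemma cnorm_vec: "(v::complex vec) \<bullet>c v = complex_of_real (\<Sum>r<dim_vec v. (cmod (v$r))^2)"
proof -
  have "(v::complex vec) \<bullet>c v = (\<Sum>r<dim_vec v. v$r * cnj (v$r))"
    by (simp add: scalar_prod_def lessThan_atLeast0)
  also have "\<dots> = (\<Sum>r<dim_vec v. complex_of_real ((cmod (v$r))^2))"
    by (rule sum.cong[OF refl]) (metis complex_norm_square)
  finally show ?thesis by (simp only: of_real_sum)
qed

lemma onb_exists:
  assumes sub: "csubspace n C"
  shows "\<exists>U k. U \<in> carrier_mat n k \<and> mat_adjoint U * U = 1\<^sub>m k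
           \<and> C = {U *\<^sub>v x | x. x \<in> carrier_vec k} \<and> cdim n C = k"
proof -
  interpret G: cof_vec_space n "TYPE(complex)" .
  obtain A where Afin: "finite A" and AC: "A \<subseteq> C" and li: "G.lin_indpt A"
    and spanA: "G.span A = C" and cd: "cdim n C = card A"
    using sub_basis[OF sub] by blast
  have Ccar: "C \<subseteq> carrier_vec n" using sub unfolding csubspace_def VectorSpace.subspace_def submodule_def
    by auto
  obtain ws where ws: "set ws = A" "distinct ws" using finite_distinct_list[OF Afin] by blast
  define us where "us = gram_schmidt n ws"
  have wsc: "set ws \<subseteq> carrier_vec n" using ws AC Ccar by auto
  note gs = G.gram_schmidt_result[OF wsc ws(2) _ us_def]
  have spanus: "G.span (set us) = C" using gs(1) li ws spanA by auto
  have orth: "corthogonal us" using gs li ws by auto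
  have usc: "set us \<subseteq> carrier_vec n" using gs li ws by auto
  define k where "k = length us"
  have kA: "k = card A" using gs(4) li ws k_def distinct_card[OF ws(2)] by auto
  define V0 where "V0 = mat_of_cols n us"
  have V0c: "V0 \<in> carrier_mat n k" unfolding V0_def k_def by simp
  have colsV0: "cols V0 = us" unfolding V0_def using usc by simp
  have Ceq: "C = {y \<in> carrier_vec n. \<exists>x\<in>carrier_vec k. V0 *\<^sub>v x = y}"
    using G.col_space_eq[OF V0c] spanus colsV0 V0c unfolding G.col_space_def by auto
  define N where "N j = (\<Sum>r<n. (cmod (us!j$r))^2)" for j
  have usj: "us ! j \<in> carrier_vec n" if "j < k" for j using usc that k_def by auto
  have Npos: "N j > 0" if j: "j < k" for j
  proof -
    have "us!j \<bullet>c us!j \<noteq> 0" using corthogonalD[OF orth, of j j] j k_def by auto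
    hence "complex_of_real (N j) \<noteq> 0" using cnorm_vec[of "us!j"] usj[OF j] N_def by simp
    hence "N j \<noteq> 0" by simp
    moreover have "N j \<ge> 0" unfolding N_def by (intro sum_nonneg) auto
    ultimately show ?thesis by simp
  qed
  define s where "s j = 1 / sqrt (N j)" for j
  define U where "U = mat n k (\<lambda>(r,j). complex_of_real (s j) * us!j $ r)"
  have Uc: "U \<in> carrier_mat n k" unfolding U_def by simp
  have UU: "mat_adjoint U * U = 1\<^sub>m k"
  proof (rule eq_matI)
    fix i j assume "i < dim_row (1\<^sub>m k)" "j < dim_col (1\<^sub>m k)"
    hence ij: "i < k" "j < k" by auto
    have ai: "mat_adjoint U $$ (i,r) = cnj (complex_of_real (s i) * us!i $ r)" if "r < n" for r
      using adj_index[OF Uc ij(1) that] that ij unfolding U_def by simp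
    have "(mat_adjoint U * U) $$ (i,j) = (\<Sum>r<n. cnj (complex_of_real (s i) * us!i $ r) * (complex_of_real (s j) * us!j $ r))"
      using ij Uc adj_carrier[OF Uc] ai by (simp add: scalar_prod_def lessThan_atLeast0 U_def)
    also have "\<dots> = complex_of_real (s i * s j) * (us!j \<bullet>c us!i)"
      using usj[OF ij(1)] usj[OF ij(2)]
      by (simp add: scalar_prod_def lessThan_atLeast0 sum_distrib_left mult_ac)
    also have "\<dots> = 1\<^sub>m k $$ (i,j)"
    proof (cases "i = j")
      case True
      have "us!j \<bullet>c us!j = complex_of_real (N j)" using cnorm_vec[of "us!j"] usj[OF ij(2)] N_def by simp
      moreover have "s j * s j * N j = 1" using Npos[OF ij(2)] unfolding s_def
        by (simp add: field_simps)
      ultimately show ?thesis using True ij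
        by (metis index_one_mat(1) of_real_1 of_real_mult)
    next
      case False
      have "us!j \<bullet>c us!i = 0" using corthogonalD[OF orth, of j i] ij k_def False by auto
      thus ?thesis using False ij by simp
    qed
    finally show "(mat_adjoint U * U) $$ (i,j) = 1\<^sub>m k $$ (i,j)" .
  qed (use Uc adj_carrier[OF Uc] in auto)
  have UV: "U *\<^sub>v x = V0 *\<^sub>v vec k (\<lambda>j. complex_of_real (s j) * x $ j)" if x: "x \<in> carrier_vec k" for x
    using x V0c Uc usc
    by (intro eq_vecI) (auto simp: U_def V0_def scalar_prod_def mult_ac mat_of_cols_def k_def)
  have VU: "V0 *\<^sub>v y = U *\<^sub>v vec k (\<lambda>j. y $ j / complex_of_real (s j))" if y: "y \<in> carrier_vec k" for y
  proof -
    have sne: "complex_of_real (s j) \<noteq> 0" if "j < k" for j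
      using Npos[OF that] unfolding s_def by simp
    have "vec k (\<lambda>j. complex_of_real (s j) * vec k (\<lambda>j. y $ j / complex_of_real (s j)) $ j) = y"
      using y sne by (intro eq_vecI) auto
    thus ?thesis using UV[of "vec k (\<lambda>j. y $ j / complex_of_real (s j))"] by simp
  qed
  have Ceq2: "C = {U *\<^sub>v x | x. x \<in> carrier_vec k}"
  proof (intro equalityI subsetI)
    fix y assume "y \<in> C"
    then obtain x where x: "x \<in> carrier_vec k" "y = V0 *\<^sub>v x" using Ceq by auto
    thus "y \<in> {U *\<^sub>v x | x. x \<in> carrier_vec k}" using VU[OF x(1)] by auto
  next
    fix y assume "y \<in> {U *\<^sub>v x | x. x \<in> carrier_vec k}"
    then obtain x where x: "x \<in> carrier_vec k" "y = U *\<^sub>v x" by auto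
    thus "y \<in> C" using UV[OF x(1)] Ceq V0c by auto
  qed
  show ?thesis using Uc UU Ceq2 cd kA by blast
qed



lemma mult_unit_col: "(M::complex mat) \<in> carrier_mat r k \<Longrightarrow> i < k \<Longrightarrow> M *\<^sub>v unit_vec k i = col M i"
  by (intro eq_vecI) auto

lemma wide_kernel:
  assumes M: "(M::complex mat) \<in> carrier_mat r k" and rk: "r < k"
  shows "\<exists>a \<in> carrier_vec k. a \<noteq> 0\<^sub>v k \<and> M *\<^sub>v a = 0\<^sub>v r"
proof (cases "distinct (cols M)")
  case True
  interpret R: vec_space "TYPE(complex)" r .
  have sub: "set (cols M) \<subseteq> carrier_vec r" using M by (auto simp: cols_def)
  have "card (set (cols M)) = k" using True M distinct_card by fastforce
  hence "\<not> R.lin_indpt (set (cols M))" using R.li_le_dim(2)[OF R.fin_dim sub] R.dim_is_n rk by auto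
  then obtain v where "v \<in> carrier_vec k" "v \<noteq> 0\<^sub>v k" "M *\<^sub>v v = 0\<^sub>v r"
    using R.lin_depE[OF M _ True] by blast
  thus ?thesis by blast
next
  case False
  then obtain i j where ij: "i < length (cols M)" "j < length (cols M)" "i \<noteq> j" "cols M ! i = cols M ! j"
    by (auto simp: distinct_conv_nth)
  hence ij2: "i < k" "j < k" using M by auto
  define a where "a = (unit_vec k i - unit_vec k j :: complex vec)"
  have ac: "a \<in> carrier_vec k" unfolding a_def by simp
  have "a $ i = 1" unfolding a_def using ij2 ij(3) by simp
  hence "a \<noteq> 0\<^sub>v k" using ij2 by auto
  moreover have "M *\<^sub>v a = 0\<^sub>v r"
  proof -
    have "M *\<^sub>v a = M *\<^sub>v unit_vec k i - M *\<^sub>v unit_vec k j"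
      unfolding a_def using M by (simp add: mult_minus_distrib_mat_vec)
    also have "\<dots> = col M i - col M j" using mult_unit_col[OF M] ij2 by simp
    also have "\<dots> = 0\<^sub>v r" using ij ij2 M by auto
    finally show ?thesis .
  qed
  ultimately show ?thesis using ac by blast
qed

lemma vanish:
  fixes U :: "complex mat" and fs :: "complex vec list"
  assumes U: "U \<in> carrier_mat n k" and UU: "mat_adjoint U * U = 1\<^sub>m k"
    and fs: "set fs \<subseteq> carrier_vec n" and rk: "length fs < k"
  shows "\<exists>x \<in> carrier_vec k. U *\<^sub>v x \<noteq> 0\<^sub>v n \<and> (\<forall>f\<in>set fs. (U *\<^sub>v x) \<bullet>c f = 0)"
proof -
  define r where "r = length fs"
  define F where "F = mat r n (\<lambda>(t,s). cnj (fs ! t $ s))"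
  have Fc: "F \<in> carrier_mat r n" unfolding F_def by simp
  obtain a where a: "a \<in> carrier_vec k" "a \<noteq> 0\<^sub>v k" "(F * U) *\<^sub>v a = 0\<^sub>v r"
    using wide_kernel[of "F * U" r k] Fc U rk r_def by auto
  have "mat_adjoint U *\<^sub>v (U *\<^sub>v a) = a"
    using U a(1) adj_carrier[OF U] UU by (simp add: assoc_mult_mat_vec[symmetric])
  hence nz: "U *\<^sub>v a \<noteq> 0\<^sub>v n"
  proof -
    assume aa: "mat_adjoint U *\<^sub>v (U *\<^sub>v a) = a"
    show ?thesis
    proof
      assume "U *\<^sub>v a = 0\<^sub>v n"
      hence "a = mat_adjoint U *\<^sub>v 0\<^sub>v n" using aa by simp
      also have "\<dots> = 0\<^sub>v k" using adj_carrier[OF U] by (intro eq_vecI) auto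
      finally show False using a(2) by simp
    qed
  qed
  have FUa: "F *\<^sub>v (U *\<^sub>v a) = 0\<^sub>v r" using a Fc U by (simp add: assoc_mult_mat_vec)
  have "(U *\<^sub>v a) \<bullet>c f = 0" if f: "f \<in> set fs" for f
  proof -
    obtain t where t: "t < r" "f = fs ! t" using f r_def by (metis in_set_conv_nth)
    have fc: "f \<in> carrier_vec n" using fs f by auto
    have "(F *\<^sub>v (U *\<^sub>v a)) $ t = (U *\<^sub>v a) \<bullet>c f"
      using t fc U by (simp add: F_def scalar_prod_def mult_ac)
    thus ?thesis using FUa t by simp
  qed
  thus ?thesis using a(1) nz by blast
qed

lemma coords:
  fixes bb :: "nat \<Rightarrow> complex vec" and A :: "complex mat" and \<mu> :: "nat \<Rightarrow> real"
  assumes bbc: "\<And>l. l < n \<Longrightarrow> bb l \<in> carrier_vec n"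
    and orth: "\<And>l l'. l < n \<Longrightarrow> l' < n \<Longrightarrow> bb l \<bullet>c bb l' = (if l = l' then 1 else 0)"
    and A: "A \<in> carrier_mat n n"
    and eig: "\<And>l. l < n \<Longrightarrow> A *\<^sub>v bb l = complex_of_real (\<mu> l) \<cdot>\<^sub>v bb l"
    and v: "v \<in> carrier_vec n"
  shows "v \<bullet>c v = (\<Sum>l<n. (v \<bullet>c bb l) * cnj (v \<bullet>c bb l))"
    and "(A *\<^sub>v v) \<bullet>c v = (\<Sum>l<n. complex_of_real (\<mu> l) * ((v \<bullet>c bb l) * cnj (v \<bullet>c bb l)))"
proof -
  define Wm where "Wm = mat n n (\<lambda>(l,s). cnj (bb l $ s))"
  have Wc: "Wm \<in> carrier_mat n n" unfolding Wm_def by simp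
  have Wac: "mat_adjoint Wm \<in> carrier_mat n n" using adj_carrier[OF Wc] .
  have Wa: "mat_adjoint Wm $$ (s,l) = bb l $ s" if "s < n" "l < n" for s l
    using adj_index[OF Wc that] that unfolding Wm_def by simp
  have WW: "Wm * mat_adjoint Wm = 1\<^sub>m n"
  proof (rule eq_matI)
    fix i j assume "i < dim_row (1\<^sub>m n)" "j < dim_col (1\<^sub>m n)"
    hence ij: "i < n" "j < n" by auto
    have "(Wm * mat_adjoint Wm) $$ (i,j) = (\<Sum>s<n. cnj (bb i $ s) * bb j $ s)"
      using ij Wc Wac Wa by (simp add: scalar_prod_def lessThan_atLeast0 Wm_def)
    also have "\<dots> = bb j \<bullet>c bb i" using bbc[OF ij(1)] bbc[OF ij(2)] ij by (simp add: scalar_prod_def lessThan_atLeast0 mult_ac)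
    also have "\<dots> = 1\<^sub>m n $$ (i,j)" using orth ij by auto
    finally show "(Wm * mat_adjoint Wm) $$ (i,j) = 1\<^sub>m n $$ (i,j)" .
  qed (use Wc Wac in auto)
  have WW2: "mat_adjoint Wm * Wm = 1\<^sub>m n" using mat_mult_left_right_inverse[OF Wc Wac WW] .
  define y where "y = Wm *\<^sub>v v"
  have yc: "y \<in> carrier_vec n" unfolding y_def using Wc v by simp
  have yl: "y $ l = v \<bullet>c bb l" if "l < n" for l
    using that v bbc[OF that] unfolding y_def Wm_def by (simp add: scalar_prod_def mult_ac)
  have vy: "mat_adjoint Wm *\<^sub>v y = v"
    unfolding y_def using Wc Wac v WW2 by (simp add: assoc_mult_mat_vec[symmetric])
  have sumy: "y \<bullet>c y = (\<Sum>l<n. (v \<bullet>c bb l) * cnj (v \<bullet>c bb l))"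
    using yc yl by (simp add: scalar_prod_def lessThan_atLeast0)
  have "y \<bullet>c y = v \<bullet>c (mat_adjoint Wm *\<^sub>v y)" unfolding y_def by (rule adj_sprod[OF Wc v yc[unfolded y_def]])
  thus "v \<bullet>c v = (\<Sum>l<n. (v \<bullet>c bb l) * cnj (v \<bullet>c bb l))" using vy sumy by simp
  define D where "D = mat n n (\<lambda>(i,j). if i = j then complex_of_real (\<mu> i) else 0)"
  have Dc: "D \<in> carrier_mat n n" unfolding D_def by simp
  have AW: "A * mat_adjoint Wm = mat_adjoint Wm * D"
  proof (rule eq_matI)
    fix s l assume "s < dim_row (mat_adjoint Wm * D)" "l < dim_col (mat_adjoint Wm * D)"
    hence sl: "s < n" "l < n" using Wac Dc by auto
    have "(A * mat_adjoint Wm) $$ (s,l) = row A s \<bullet> col (mat_adjoint Wm) l" using A Wac sl by simp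
    also have "col (mat_adjoint Wm) l = bb l" using Wac Wa sl bbc[OF sl(2)] by (intro eq_vecI) auto
    also have "row A s \<bullet> bb l = (A *\<^sub>v bb l) $ s" using A sl by simp
    also have "\<dots> = complex_of_real (\<mu> l) * bb l $ s" using eig[OF sl(2)] bbc[OF sl(2)] sl by simp
    also have "\<dots> = (\<Sum>t\<in>{0..<n}. mat_adjoint Wm $$ (s,t) * D $$ (t,l))"
    proof -
      have "(\<Sum>t\<in>{0..<n}. mat_adjoint Wm $$ (s,t) * D $$ (t,l)) = (\<Sum>t\<in>{0..<n}. if t = l then bb l $ s * complex_of_real (\<mu> l) else 0)"
        using sl Wa by (intro sum.cong) (auto simp: D_def)
      also have "\<dots> = bb l $ s * complex_of_real (\<mu> l)" using sl by simp
      finally show ?thesis by simp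
    qed
    also have "\<dots> = (mat_adjoint Wm * D) $$ (s,l)" using Wac Dc sl by (simp add: scalar_prod_def)
    finally show "(A * mat_adjoint Wm) $$ (s,l) = (mat_adjoint Wm * D) $$ (s,l)" .
  qed (use A Wac Dc in auto)
  have "A *\<^sub>v v = mat_adjoint Wm *\<^sub>v (D *\<^sub>v y)"
  proof -
    have "A *\<^sub>v v = A *\<^sub>v (mat_adjoint Wm *\<^sub>v y)" using vy by simp
    also have "\<dots> = (A * mat_adjoint Wm) *\<^sub>v y" using A Wac yc by (simp add: assoc_mult_mat_vec)
    also have "\<dots> = mat_adjoint Wm *\<^sub>v (D *\<^sub>v y)" unfolding AW using Wac Dc yc by (simp add: assoc_mult_mat_vec)
    finally show ?thesis .
  qed
  hence "(A *\<^sub>v v) \<bullet>c v = (D *\<^sub>v y) \<bullet>c (mat_adjoint (mat_adjoint Wm) *\<^sub>v v)"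
    using adj_sprod[OF Wac _ v, of "D *\<^sub>v y"] Dc yc by simp
  also have "\<dots> = (D *\<^sub>v y) \<bullet>c y" using adj_adj[OF Wc] y_def by simp
  also have "\<dots> = (\<Sum>l<n. complex_of_real (\<mu> l) * (y $ l * cnj (y $ l)))"
  proof -
    have Dy: "(D *\<^sub>v y) $ l = complex_of_real (\<mu> l) * y $ l" if "l < n" for l
    proof -
      have "(D *\<^sub>v y) $ l = (\<Sum>t\<in>{0..<n}. D $$ (l,t) * y $ t)" using that Dc yc by (simp add: scalar_prod_def)
      also have "\<dots> = (\<Sum>t\<in>{0..<n}. if t = l then complex_of_real (\<mu> l) * y $ l else 0)"
        using that by (intro sum.cong) (auto simp: D_def)
      finally show ?thesis using that by simp
    qed
    show ?thesis using Dy yc Dc by (simp add: scalar_prod_def lessThan_atLeast0 mult_ac)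
  qed
  finally show "(A *\<^sub>v v) \<bullet>c v = (\<Sum>l<n. complex_of_real (\<mu> l) * ((v \<bullet>c bb l) * cnj (v \<bullet>c bb l)))"
    using yl by simp
qed



lemma quad:
  fixes U X :: "complex mat"
  assumes U: "U \<in> carrier_mat n k" and UU: "mat_adjoint U * U = 1\<^sub>m k"
    and X: "X \<in> carrier_mat n n"
    and PXP: "(U * mat_adjoint U) * X * (U * mat_adjoint U) = complex_of_real e \<cdot>\<^sub>m (U * mat_adjoint U)"
    and x: "x \<in> carrier_vec k"
  shows "(X *\<^sub>v (U *\<^sub>v x)) \<bullet>c (U *\<^sub>v x) = complex_of_real e * ((U *\<^sub>v x) \<bullet>c (U *\<^sub>v x))"
proof -
  define P where "P = U * mat_adjoint U"
  define v where "v = U *\<^sub>v x"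
  have op: "is_orth_proj n {U *\<^sub>v x | x. x \<in> carrier_vec k} P" unfolding P_def by (rule proj_of_isometry[OF U UU])
  hence Pc: "P \<in> carrier_mat n n" and PP: "P * P = P" and Pa: "mat_adjoint P = P"
    and Pr: "{P *\<^sub>v v | v. v \<in> carrier_vec n} = {U *\<^sub>v x | x. x \<in> carrier_vec k}"
    unfolding is_orth_proj_def by auto
  have vc: "v \<in> carrier_vec n" unfolding v_def using U x by simp
  have "v \<in> {P *\<^sub>v v | v. v \<in> carrier_vec n}" using Pr x v_def by auto
  then obtain w where w: "w \<in> carrier_vec n" "v = P *\<^sub>v w" by auto
  have Pv: "P *\<^sub>v v = v" using w Pc by (simp add: assoc_mult_mat_vec[symmetric] PP)
  have "(X *\<^sub>v v) \<bullet>c v = (X *\<^sub>v (P *\<^sub>v v)) \<bullet>c (P *\<^sub>v v)" using Pv by simp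
  also have "\<dots> = (P *\<^sub>v (X *\<^sub>v (P *\<^sub>v v))) \<bullet>c v"
    using adj_sprod[OF Pc _ vc, of "X *\<^sub>v (P *\<^sub>v v)"] Pa X Pc vc by simp
  also have "P *\<^sub>v (X *\<^sub>v (P *\<^sub>v v)) = (P * X * P) *\<^sub>v v"
  proof -
    have PX: "P * X \<in> carrier_mat n n" using Pc X by simp
    have "(P * X * P) *\<^sub>v v = (P * X) *\<^sub>v (P *\<^sub>v v)" by (rule assoc_mult_mat_vec[OF PX Pc vc])
    also have "\<dots> = P *\<^sub>v (X *\<^sub>v (P *\<^sub>v v))" using Pc X vc by (intro assoc_mult_mat_vec) auto
    finally show ?thesis by simp
  qed
  also have "\<dots> = (complex_of_real e \<cdot>\<^sub>m P) *\<^sub>v v" using PXP P_def by simp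
  also have "\<dots> = complex_of_real e \<cdot>\<^sub>v (P *\<^sub>v v)" using Pc vc by (intro eq_vecI) auto
  also have "\<dots> = complex_of_real e \<cdot>\<^sub>v v" using Pv by simp
  also have "(complex_of_real e \<cdot>\<^sub>v v) \<bullet>c v = complex_of_real e * (v \<bullet>c v)" using vc by simp
  finally show ?thesis unfolding v_def .
qed



theorem proposition1:
  fixes n m :: nat
    and A :: "nat \<Rightarrow> complex mat"
    and b :: "nat \<Rightarrow> complex vec"
    and w :: "nat \<Rightarrow> nat \<Rightarrow> complex vec"
    and lam :: "nat \<Rightarrow> nat \<Rightarrow> real"
  assumes n2: "n \<ge> 2" and m1: "1 \<le> m" and mn: "m \<le> n - 1"
    and sa: "\<forall>i\<in>{1..m}. self_adjoint n (A i)"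
    and basis: "\<forall>c. lincomb n A m c = 0\<^sub>m n n \<longrightarrow> (\<forall>i\<le>m. c i = 0)"
    and comm: "\<forall>i\<in>{1..m}. \<forall>j\<in>{1..m}. A i * A j = A j * A i"
    and onb_car: "\<forall>l\<in>{1..n}. b l \<in> carrier_vec n"
    and onb: "\<forall>l\<in>{1..n}. \<forall>l'\<in>{1..n}. b l \<bullet>c b l' = (if l = l' then 1 else 0)"
    and common: "\<forall>i\<in>{1..m}. \<forall>l\<in>{1..n}. \<exists>\<mu>. A i *\<^sub>v b l = \<mu> \<cdot>\<^sub>v b l"
    and wperm: "\<forall>i\<in>{1..m}. bij_betw (w i) {1..n} (b ` {1..n})"
    and weig: "\<forall>i\<in>{1..m}. \<forall>j\<in>{1..n}. A i *\<^sub>v w i j = complex_of_real (lam i j) \<cdot>\<^sub>v w i j"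
    and trop: "\<forall>i\<in>{1..m}. \<forall>j. 1 \<le> j \<and> j < n \<longrightarrow>
                 0 < lam i (j+1) \<and> lam i (j+1) < lam i j / (real n)^2"
    and cyc: "\<forall>i. 1 \<le> i \<and> i < m \<longrightarrow> (\<forall>j\<in>{1..n}.
                 w (i+1) j = w i ((j + shift n m i - 1) mod n + 1))"
    and enum: "\<forall>l\<in>{1..n}. \<exists>i\<in>{1..m}. b l = w i (nat \<lceil>real l / real m\<rceil>)"
  shows "\<forall>C. is_code n (span_E n A m) C \<longrightarrow> cdim n C \<le> nat \<lceil>real n / real (m+1)\<rceil>"
proof (intro allI impI)
  fix C assume code: "is_code n (span_E n A m) C"
  define K where "K = nat \<lceil>real n / real (m+1)\<rceil>"
  have csub: "csubspace n C" using code unfolding is_code_def by auto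
  obtain \<epsilon> where eps: "\<forall>X\<in>span_E n A m. orth_proj n C * X * orth_proj n C = complex_of_real (\<epsilon> X) \<cdot>\<^sub>m orth_proj n C"
    using code unfolding is_code_def by auto
  obtain U k where U: "U \<in> carrier_mat n k" and UU: "mat_adjoint U * U = 1\<^sub>m k"
    and Ceq: "C = {U *\<^sub>v x | x. x \<in> carrier_vec k}" and cd: "cdim n C = k"
    using onb_exists[OF csub] by blast
  have OP: "orth_proj n C = U * mat_adjoint U" using orth_proj_eq[OF U UU] Ceq by simp
  have Acar: "A i \<in> carrier_mat n n" if "i \<in> {1..m}" for i
    using sa that unfolding self_adjoint_def by auto
  have Ain: "A i \<in> span_E n A m" if i: "i \<in> {1..m}" for i
  proof -
    have "lincomb n A m (\<lambda>t. if t = i then 1 else 0) = A i"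
    proof (rule eq_matI)
      fix r s assume "r < dim_row (A i)" "s < dim_col (A i)"
      hence rs: "r < n" "s < n" using Acar[OF i] by auto
      have "(\<Sum>t=1..m. complex_of_real (if t = i then 1 else 0) * A t $$ (r,s))
          = (\<Sum>t=1..m. if t = i then A i $$ (r,s) else 0)"
        by (intro sum.cong) auto
      also have "\<dots> = A i $$ (r,s)" using i by simp
      finally show "lincomb n A m (\<lambda>t. if t = i then 1 else 0) $$ (r,s) = A i $$ (r,s)"
        using rs i unfolding lincomb_def by auto
    qed (use Acar[OF i] in \<open>auto simp: lincomb_def\<close>)
    thus ?thesis unfolding span_E_def by (metis (mono_tags, lifting) mem_Collect_eq)
  qed
  have bc: "b (l+1) \<in> carrier_vec n" if "l < n" for l using onb_car that by auto
  have borth: "b (l+1) \<bullet>c b (l'+1) = (if l = l' then 1 else 0)" if "l < n" "l' < n" for l l'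
    using onb that by auto
  have binj: "l = l'" if "l \<in> {1..n}" "l' \<in> {1..n}" "b l = b l'" for l l'
  proof (rule ccontr)
    assume "l \<noteq> l'"
    have h1: "b l \<bullet>c b l' = (if l = l' then 1 else 0)" using bspec[OF bspec[OF onb that(1)] that(2)] .
    have h2: "b l \<bullet>c b l = (if l = l then 1 else 0)" using bspec[OF bspec[OF onb that(1)] that(1)] .
    from h1 \<open>l \<noteq> l'\<close> have "b l \<bullet>c b l' = 0" by simp
    moreover from h2 have "b l \<bullet>c b l = 1" by simp
    ultimately show False using that(3) by simp
  qed
  define jj where "jj i l = (THE j. j \<in> {1..n} \<and> w i j = b (l+1))" for i l
  have jjuniq: "jj i l = j" if i: "i \<in> {1..m}" and j: "j \<in> {1..n}" and wj: "w i j = b (l+1)" for i l j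
  proof -
    have inj: "inj_on (w i) {1..n}" using bspec[OF wperm i] by (rule bij_betw_imp_inj_on)
    show ?thesis unfolding jj_def
    proof (rule the_equality)
      show "j \<in> {1..n} \<and> w i j = b (l+1)" using j wj by simp
      fix x assume x: "x \<in> {1..n} \<and> w i x = b (l+1)"
      hence "w i x = w i j" using wj by simp
      thus "x = j" using inj_onD[OF inj] x j by blast
    qed
  qed
  have jjprop: "jj i l \<in> {1..n} \<and> w i (jj i l) = b (l+1)" if i: "i \<in> {1..m}" and l: "l < n" for i l
  proof -
    have im: "w i ` {1..n} = b ` {1..n}" using bspec[OF wperm i] by (rule bij_betw_imp_surj_on)
    have "b (l+1) \<in> b ` {1..n}" using l by simp
    hence "b (l+1) \<in> w i ` {1..n}" using im by simp
    then obtain j where j: "j \<in> {1..n}" "w i j = b (l+1)" by auto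
    thus ?thesis using jjuniq[OF i j] by simp
  qed
  have jjinj: "l = l'" if i: "i \<in> {1..m}" "l < n" "l' < n" "jj i l = jj i l'" for i l l'
  proof -
    have "b (l+1) = b (l'+1)" using jjprop[OF i(1) i(2)] jjprop[OF i(1) i(3)] i(4) by simp
    thus ?thesis using binj[of "l+1" "l'+1"] i by auto
  qed
  have eig: "A i *\<^sub>v b (l+1) = complex_of_real (lam i (jj i l)) \<cdot>\<^sub>v b (l+1)" if i: "i \<in> {1..m}" and l: "l < n" for i l
    using weig i jjprop[OF i l] by metis
  define p where "p v l = (cmod (v \<bullet>c b (l+1)))^2" for v l
  have pnn: "p v l \<ge> 0" for v l unfolding p_def by simp
  have yy: "(v \<bullet>c b (l+1)) * cnj (v \<bullet>c b (l+1)) = complex_of_real (p v l)" for v l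
    unfolding p_def by (metis complex_norm_square of_real_power)
  have keyeq: "\<epsilon> (A i) * (\<Sum>l<n. p v l) = (\<Sum>l<n. lam i (jj i l) * p v l)"
    if i: "i \<in> {1..m}" and v: "v \<in> C" for i v
  proof -
    obtain x where x: "x \<in> carrier_vec k" "v = U *\<^sub>v x" using v Ceq by auto
    have vc: "v \<in> carrier_vec n" using x U by simp
    have PXP: "(U * mat_adjoint U) * A i * (U * mat_adjoint U) = complex_of_real (\<epsilon> (A i)) \<cdot>\<^sub>m (U * mat_adjoint U)"
      using eps Ain[OF i] OP by metis
    have q: "(A i *\<^sub>v v) \<bullet>c v = complex_of_real (\<epsilon> (A i)) * (v \<bullet>c v)"
      using quad[OF U UU Acar[OF i] PXP x(1)] x(2) by simp
    note co = coords[of n "\<lambda>l. b (l+1)" "A i" "\<lambda>l. lam i (jj i l)" v, OF bc borth Acar[OF i] eig[OF i] vc]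
    have c1: "v \<bullet>c v = complex_of_real (\<Sum>l<n. p v l)" using co(1) yy by simp
    have c2: "(A i *\<^sub>v v) \<bullet>c v = complex_of_real (\<Sum>l<n. lam i (jj i l) * p v l)" using co(2) yy by simp
    have "complex_of_real (\<epsilon> (A i) * (\<Sum>l<n. p v l)) = complex_of_real (\<Sum>l<n. lam i (jj i l) * p v l)"
      using q c1 c2 by simp
    thus ?thesis using of_real_eq_iff by blast
  qed
  have Spos: "(\<Sum>l<n. p v l) > 0" if v: "v \<in> C" "v \<noteq> 0\<^sub>v n" for v
  proof -
    obtain x where x: "x \<in> carrier_vec k" "v = U *\<^sub>v x" using v Ceq by auto
    have vc: "v \<in> carrier_vec n" using x U by simp
    note co = coords[of n "\<lambda>l. b (l+1)" "A 1" "\<lambda>l. lam 1 (jj 1 l)" v, OF bc borth Acar eig vc]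
    have c1: "v \<bullet>c v = complex_of_real (\<Sum>l<n. p v l)" using co(1) m1 yy by simp
    have "v \<bullet>c v \<noteq> 0" using conjugate_square_eq_0_vec[OF vc] v by simp
    hence "(\<Sum>l<n. p v l) \<noteq> 0" by (metis c1 of_real_0)
    moreover have "(\<Sum>l<n. p v l) \<ge> 0" using pnn by (simp add: sum_nonneg)
    ultimately show ?thesis by simp
  qed
  have vanishZ: "\<exists>v\<in>C. v \<noteq> 0\<^sub>v n \<and> (\<forall>l\<in>Z. p v l = 0)" if Z: "Z \<subseteq> {..<n}" "card Z < k" for Z
  proof -
    define fs where "fs = map (\<lambda>l. b (l+1)) (sorted_list_of_set Z)"
    have fZ: "finite Z" using Z finite_subset by blast
    have fsc: "set fs \<subseteq> carrier_vec n" using Z bc unfolding fs_def by (auto simp: fZ)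
    have fsl: "length fs < k" using Z unfolding fs_def by simp
    obtain x where x: "x \<in> carrier_vec k" "U *\<^sub>v x \<noteq> 0\<^sub>v n" "\<forall>f\<in>set fs. (U *\<^sub>v x) \<bullet>c f = 0"
      using vanish[OF U UU fsc fsl] by blast
    have "\<forall>l\<in>Z. p (U *\<^sub>v x) l = 0" using x(3) fZ unfolding fs_def p_def by auto
    moreover have "U *\<^sub>v x \<in> C" using Ceq x by auto
    ultimately show ?thesis using x by blast
  qed
  have n0: "(0::real) < real n" using n2 by simp
  have lampos: "lam i j > 0" if i: "i \<in> {1..m}" and j: "j \<in> {1..n}" for i j
  proof (cases "j = 1")
    case True
    have "0 < lam i 2 \<and> lam i 2 < lam i 1 / (real n)^2" using trop i n2 by (metis one_add_one le_refl less_le_trans one_less_numeral_iff semiring_norm(76))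
    hence "0 < lam i 1 / (real n)^2" by linarith
    hence "0 < lam i 1" using n0 by (simp add: zero_less_divide_iff)
    thus ?thesis using True by simp
  next
    case False
    hence "1 \<le> j - 1" "j - 1 < n" "j - 1 + 1 = j" using j by auto
    thus ?thesis using trop i by metis
  qed
  have lamstep: "lam i (j+1) \<le> lam i j" if i: "i \<in> {1..m}" and j: "1 \<le> j" "j < n" for i j
  proof -
    have t: "lam i (j+1) < lam i j / (real n)^2" using trop i j by blast
    have lp: "lam i j > 0" using lampos[OF i] j by auto
    have "(real n)^2 \<ge> 1" using n2 by (simp add: one_le_power)
    hence "lam i j / (real n)^2 \<le> lam i j" using lp by (simp add: divide_le_eq)
    thus ?thesis using t by simp
  qed
  have lammono: "lam i (j+d) \<le> lam i j" if i: "i \<in> {1..m}" and j: "1 \<le> j" "j + d \<le> n" for i j d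
    using j
  proof (induction d)
    case 0 then show ?case by simp
  next
    case (Suc d)
    hence "lam i (j+d) \<le> lam i j" by simp
    moreover have "lam i (j+d+1) \<le> lam i (j+d)" using lamstep[OF i, of "j+d"] Suc.prems by simp
    ultimately show ?case by simp
  qed
  have lammono2: "lam i j' \<le> lam i j" if i: "i \<in> {1..m}" and j: "1 \<le> j" "j \<le> j'" "j' \<le> n" for i j j'
    using lammono[OF i j(1), of "j' - j"] j by simp
  have Kge: "real n \<le> real (m+1) * real K"
  proof -
    have "real n / real (m+1) \<le> of_int \<lceil>real n / real (m+1)\<rceil>" by (rule le_of_int_ceiling)
    moreover have x0: "0 \<le> real n / real (m+1)" by simp
    moreover have "\<lceil>real n / real (m+1)\<rceil> \<ge> 0" using ceiling_mono[OF x0] by simp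
    ultimately have "real n / real (m+1) \<le> real K" unfolding K_def by simp
    thus ?thesis by (simp add: divide_le_eq mult.commute)
  qed
  have K1: "1 \<le> K"
  proof -
    have "0 < real n / real (m+1)" using n0 by simp
    hence "0 < \<lceil>real n / real (m+1)\<rceil>" by simp
    thus ?thesis unfolding K_def by linarith
  qed
  have Kn: "K \<le> n"
  proof -
    have "real n / real (m+1) \<le> real n" using n0 by (simp add: divide_le_eq)
    hence "\<lceil>real n / real (m+1)\<rceil> \<le> \<lceil>real n\<rceil>" by (rule ceiling_mono)
    hence "\<lceil>real n / real (m+1)\<rceil> \<le> int n" by simp
    thus ?thesis unfolding K_def by (metis nat_int nat_mono)
  qed
  have KnK: "n \<le> (m+1) * K" using Kge by (metis of_nat_le_iff of_nat_mult)
  show "cdim n C \<le> nat \<lceil>real n / real (m+1)\<rceil>"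
  proof (rule ccontr)
    assume "\<not> cdim n C \<le> nat \<lceil>real n / real (m+1)\<rceil>"
    hence Kk: "K < k" using cd K_def by simp
    show False
    proof (cases "\<exists>i\<in>{1..m}. lam i K \<le> real n * \<epsilon> (A i)")
      case True
      then obtain i where i: "i \<in> {1..m}" and lK: "lam i K \<le> real n * \<epsilon> (A i)" by blast
      define Z where "Z = {l. l < n \<and> jj i l \<le> K}"
      have Zsub: "Z \<subseteq> {..<n}" unfolding Z_def by auto
      have "card Z \<le> card {1..K}"
      proof (rule card_inj_on_le)
        show "inj_on (jj i) Z" using jjinj[OF i] unfolding Z_def inj_on_def by auto
        show "jj i ` Z \<subseteq> {1..K}" using jjprop[OF i] unfolding Z_def by auto
      qed auto
      hence "card Z < k" using Kk by simp
      then obtain v where v: "v \<in> C" "v \<noteq> 0\<^sub>v n" and pz: "\<forall>l\<in>Z. p v l = 0"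
        using vanishZ[OF Zsub] by blast
      define S where "S = (\<Sum>l<n. p v l)"
      have S0: "S > 0" using Spos[OF v] S_def by simp
      define e where "e = \<epsilon> (A i)"
      have ke: "e * S = (\<Sum>l<n. lam i (jj i l) * p v l)" using keyeq[OF i v(1)] e_def S_def by simp
      obtain l1 where l1: "l1 < n" "p v l1 > 0"
      proof (rule ccontr)
        assume "\<not> thesis"
        hence "\<forall>l<n. p v l \<le> 0" using that by force
        hence "S \<le> 0" unfolding S_def by (auto intro!: sum_nonpos)
        thus False using S0 by simp
      qed
      have "l1 \<notin> Z" using pz l1 by auto
      hence Kl1: "K < jj i l1" using l1 unfolding Z_def by auto
      have jl1: "jj i l1 \<le> n" using jjprop[OF i l1(1)] by simp
      have Kn': "K < n" using Kl1 jl1 by simp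
      have terms: "lam i (jj i l) * p v l \<le> lam i (K+1) * p v l" if l: "l < n" for l
      proof (cases "l \<in> Z")
        case True thus ?thesis using pz by simp
      next
        case False
        hence "K + 1 \<le> jj i l" "jj i l \<le> n" using l jjprop[OF i l] unfolding Z_def by auto
        hence "lam i (jj i l) \<le> lam i (K+1)" using lammono2[OF i, of "K+1" "jj i l"] by simp
        thus ?thesis using pnn[of v l] by (simp add: mult_right_mono)
      qed
      have "e * S \<le> lam i (K+1) * S"
      proof -
        have "(\<Sum>l<n. lam i (jj i l) * p v l) \<le> (\<Sum>l<n. lam i (K+1) * p v l)"
          using terms by (intro sum_mono) auto
        also have "\<dots> = lam i (K+1) * S" by (simp add: S_def sum_distrib_left)
        finally show ?thesis using ke by simp
      qed
      moreover have "lam i (K+1) < lam i K / (real n)^2" using trop i K1 Kn' by blast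
      moreover have "lam i K / (real n)^2 \<le> real n * e / (real n)^2" using lK e_def n0 by (simp add: divide_right_mono)
      moreover have "real n * e / (real n)^2 = e / real n" using n0 by (simp add: power2_eq_square)
      ultimately have lt: "e * S < e / real n * S" using S0 by (smt (verit) mult_strict_right_mono)
      have "e * S \<ge> lam i (jj i l1) * p v l1"
      proof -
        have tnn: "0 \<le> lam i (jj i l) * p v l" if "l \<in> {..<n}" for l
        proof -
          have "jj i l \<in> {1..n}" using jjprop[OF i] that by auto
          hence "0 \<le> lam i (jj i l)" using lampos[OF i] less_imp_le by blast
          thus ?thesis using pnn by simp
        qed
        show ?thesis unfolding ke by (rule member_le_sum) (use tnn l1 in auto)
      qed
      moreover have "lam i (jj i l1) * p v l1 > 0" using lampos[OF i] jjprop[OF i l1(1)] l1 by simp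
      ultimately have ePos: "e * S > 0" by simp
      have "e / real n * S = (e * S) / real n" by simp
      also have "\<dots> \<le> e * S"
      proof -
        have "e * S * 1 \<le> e * S * real n" using ePos n2 by (intro mult_left_mono) auto
        thus ?thesis using n0 by (simp add: divide_le_eq)
      qed
      finally show False using lt by simp
    next
      case False
      hence lK: "\<forall>i\<in>{1..m}. real n * \<epsilon> (A i) < lam i K" by auto
      define Z where "Z = {l. l < n \<and> m * K \<le> l}"
      have Zsub: "Z \<subseteq> {..<n}" unfolding Z_def by auto
      have "Z = {m*K..<n}" unfolding Z_def by auto
      hence "card Z = n - m * K" by simp
      hence "card Z \<le> K" using KnK by simp
      hence "card Z < k" using Kk by simp
      then obtain v where v: "v \<in> C" "v \<noteq> 0\<^sub>v n" and pz: "\<forall>l\<in>Z. p v l = 0"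
        using vanishZ[OF Zsub] by blast
      define S where "S = (\<Sum>l<n. p v l)"
      have S0: "S > 0" using Spos[OF v] S_def by simp
      obtain l0 where l0: "l0 < n" "S \<le> real n * p v l0"
      proof (rule ccontr)
        assume "\<not> thesis"
        hence lt: "\<forall>l<n. real n * p v l < S" using that by force
        have "(\<Sum>l<n. real n * p v l) < (\<Sum>l<n. S)"
          using lt n2 by (intro sum_strict_mono) (auto simp: lessThan_empty_iff)
        thus False unfolding S_def by (simp add: sum_distrib_left[symmetric])
      qed
      have "p v l0 > 0" using l0 S0 n0 by (smt (verit) mult_nonneg_nonpos pnn)
      hence "l0 \<notin> Z" using pz by auto
      hence l0mK: "l0 + 1 \<le> m * K" using l0 unfolding Z_def by auto
      obtain i where i: "i \<in> {1..m}" and bl: "b (l0+1) = w i (nat \<lceil>real (l0+1) / real m\<rceil>)"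
        using enum l0 by (metis Suc_eq_plus1 Suc_leI atLeastAtMost_iff le_add2 of_nat_Suc)
      define j0 where "j0 = nat \<lceil>real (l0+1) / real m\<rceil>"
      have m0: "(0::real) < real m" using m1 by simp
      have j0K: "j0 \<le> K"
      proof -
        have "real (l0+1) \<le> real m * real K" using l0mK by (metis of_nat_le_iff of_nat_mult)
        hence "real (l0+1) / real m \<le> real K" using m0 by (simp add: divide_le_eq mult.commute)
        hence "real (l0+1) / real m \<le> of_int (int K)" by simp
        hence "\<lceil>real (l0+1) / real m\<rceil> \<le> int K" by (rule ceiling_le)
        thus ?thesis unfolding j0_def by (metis nat_int nat_mono)
      qed
      have j01: "1 \<le> j0"
      proof -
        have "0 < real (l0+1) / real m" using m0 by simp
        hence "0 < \<lceil>real (l0+1) / real m\<rceil>" by simp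
        thus ?thesis unfolding j0_def by linarith
      qed
      have jj0: "jj i l0 = j0" using jjuniq[OF i, of j0 l0] bl j0K j01 Kn unfolding j0_def by auto
      define e where "e = \<epsilon> (A i)"
      have ke: "e * S = (\<Sum>l<n. lam i (jj i l) * p v l)" using keyeq[OF i v(1)] e_def S_def by simp
      have "e * S \<ge> lam i (jj i l0) * p v l0"
      proof -
        have tnn: "0 \<le> lam i (jj i l) * p v l" if "l \<in> {..<n}" for l
        proof -
          have "jj i l \<in> {1..n}" using jjprop[OF i] that by auto
          hence "0 \<le> lam i (jj i l)" using lampos[OF i] less_imp_le by blast
          thus ?thesis using pnn by simp
        qed
        show ?thesis unfolding ke by (rule member_le_sum) (use tnn l0 in auto)
      qed
      hence "e * S \<ge> lam i j0 * p v l0" using jj0 by simp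
      moreover have "lam i K \<le> lam i j0" using lammono2[OF i j01 j0K Kn] .
      moreover have lKp: "lam i K > 0" using lampos[OF i] K1 Kn by simp
      ultimately have "e * S \<ge> lam i K * p v l0" using pnn[of v l0] by (smt (verit) mult_right_mono)
      hence "real n * (e * S) \<ge> lam i K * (real n * p v l0)" using n0
        by (smt (verit) mult_left_mono mult.left_commute)
      moreover have "lam i K * (real n * p v l0) \<ge> lam i K * S" using l0(2) lKp by simp
      moreover have "lam i K * S > real n * e * S" using lK i e_def S0 by simp
      ultimately show False by (simp add: mult.assoc)
    qed
  qed
qed


end
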